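(* Let $G$ be a finite group generated by reflections of a real Euclidean space $V$ with root system $R$, and $\mathcal M_G\subset V\otimes\mathbb C$ the complement of the complexified reflection hyperplanes. Let $\sigma\in G$ be a special involution, with $V_1,V_2,R_1,R_2,G_1,G_2$ as in the context. Then every connected component of the fixed set $F_{\bar\sigma}=\{z\in\mathcal M_G:\sigma(\bar z)=z\}$ is contractible, and the number of connected components is $|G_1|\,|G_2|$.
   Context: For an involution $\sigma\in G$ (including the identity), let $V_1=\{v:\sigma v=-v\}$ and $V_2=\{v:\sigma v=v\}$, $R_i=R\cap V_i$, and $G_i$ the subgroup of $G$ generated by the reflections in the roots of $R_i$ ($i=1,2$). The involution $\sigma$ is called special if for every root $a\in R$ at least one of the orthogonal projections of $a$ onto $V_1$ and onto $V_2$ is proportional to a root from $R_1$ or $R_2$. *)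

theory Defs
  imports "HOL-Analysis.Analysis"
begin

definition refl :: "'a::euclidean_space \<Rightarrow> 'a \<Rightarrow> 'a" where
  "refl a v = v - (2 * (v \<bullet> a) / (a \<bullet> a)) *\<^sub>R a"

text \<open>Group generated by the reflections in the vectors of a set R
  (reflections are involutions, so closing under left composition suffices).\<close>
inductive_set refl_group :: "'a::euclidean_space set \<Rightarrow> ('a \<Rightarrow> 'a) set"
  for R :: "'a set" where
  id_in: "id \<in> refl_group R"
| step: "g \<in> refl_group R \<Longrightarrow> a \<in> R \<Longrightarrow> refl a \<circ> g \<in> refl_group R"

definition root_system :: "'a::euclidean_space set \<Rightarrow> bool" where
  "root_system R \<longleftrightarrow> finite R \<and> 0 \<notin> R \<and> (\<forall>a\<in>R. \<forall>b\<in>R. refl a b \<in> R)"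

definition orth_proj :: "'a::euclidean_space set \<Rightarrow> 'a \<Rightarrow> 'a" where
  "orth_proj S v = (THE p. p \<in> S \<and> (\<forall>w\<in>S. (v - p) \<bullet> w = 0))"

definition minus_eigenspace :: "('a::euclidean_space \<Rightarrow> 'a) \<Rightarrow> 'a set" where
  "minus_eigenspace \<sigma> = {v. \<sigma> v = - v}"

definition plus_eigenspace :: "('a::euclidean_space \<Rightarrow> 'a) \<Rightarrow> 'a set" where
  "plus_eigenspace \<sigma> = {v. \<sigma> v = v}"

definition proportional_to_root :: "'a::real_vector \<Rightarrow> 'a set \<Rightarrow> bool" where
  "proportional_to_root p S \<longleftrightarrow> (\<exists>b\<in>S. \<exists>c::real. p = c *\<^sub>R b)"

text \<open>Special involution (V1 = (-1)-eigenspace, V2 = (+1)-eigenspace, Ri = R \<inter> Vi).\<close>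
definition special_involution :: "'a::euclidean_space set \<Rightarrow> ('a \<Rightarrow> 'a) \<Rightarrow> bool" where
  "special_involution R \<sigma> \<longleftrightarrow>
     \<sigma> \<in> refl_group R \<and> \<sigma> \<circ> \<sigma> = id \<and>
     (\<forall>a\<in>R.
        proportional_to_root (orth_proj (minus_eigenspace \<sigma>) a)
           ((R \<inter> minus_eigenspace \<sigma>) \<union> (R \<inter> plus_eigenspace \<sigma>))
      \<or> proportional_to_root (orth_proj (plus_eigenspace \<sigma>) a)
           ((R \<inter> minus_eigenspace \<sigma>) \<union> (R \<inter> plus_eigenspace \<sigma>)))"

text \<open>Complexification V \<otimes> C modelled as V \<times> V, (x,y) \<leftrightarrow> x + i y.
  The complexified hyperplane of a is {z. a\<bullet>z = 0}, i.e. a\<bullet>x = 0 and a\<bullet>y = 0.\<close>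
definition hyperplane_complement :: "'a::euclidean_space set \<Rightarrow> ('a \<times> 'a) set" where
  "hyperplane_complement R = {(x, y). \<forall>a\<in>R. \<not> (a \<bullet> x = 0 \<and> a \<bullet> y = 0)}"

text \<open>Fixed set of z \<mapsto> \<sigma>(conj z): \<sigma>(x - i y) = x + i y.\<close>
definition conj_fixed_set :: "'a::euclidean_space set \<Rightarrow> ('a \<Rightarrow> 'a) \<Rightarrow> ('a \<times> 'a) set" where
  "conj_fixed_set R \<sigma> = {(x, y) \<in> hyperplane_complement R. \<sigma> x = x \<and> - \<sigma> y = y}"

end

theory Submission
  imports Defs
begin


lemma refl_linear: "linear (refl a)"
  unfolding refl_def by (auto intro!: linearI simp: algebra_simps inner_add_left inner_scaleR_left divide_simps scaleR_add_left[symmetric])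

lemma refl_inner:
  assumes "a \<noteq> 0" shows "refl a u \<bullet> refl a v = u \<bullet> v"
  using assms unfolding refl_def
  by (simp add: inner_diff_left inner_diff_right algebra_simps divide_simps) (simp add: inner_commute power2_eq_square)

lemma refl_refl: assumes "a \<noteq> 0" shows "refl a (refl a v) = v"
  using assms unfolding refl_def
  by (simp add: inner_diff_left algebra_simps divide_simps scaleR_left_diff_distrib[symmetric])

lemma refl_self: assumes "a \<noteq> 0" shows "refl a a = - a"
  using assms unfolding refl_def by (simp add: algebra_simps scaleR_2)

lemma refl_scale: assumes "c \<noteq> 0" shows "refl (c *\<^sub>R a) = refl a"
  using assms unfolding refl_def
  by (auto simp: fun_eq_iff power2_eq_square field_simps)

lemma refl_conj:
  assumes "linear h" "\<And>u v. h u \<bullet> h v = u \<bullet> v"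
  shows "refl (h a) (h v) = h (refl a v)"
  unfolding refl_def assms(2) using assms(1)
  by (simp add: linear_diff linear_scale)

fun wev :: "'a::euclidean_space list \<Rightarrow> 'a \<Rightarrow> 'a" where
  "wev [] = id"
| "wev (a # w) = refl a \<circ> wev w"

lemma wev_append: "wev (u @ v) = wev u \<circ> wev v"
  by (induction u) auto

lemma refl_group_wev: "refl_group R = wev ` lists R"
proof
  show "refl_group R \<subseteq> wev ` lists R"
  proof
    fix g assume "g \<in> refl_group R"
    then show "g \<in> wev ` lists R"
    proof (induction rule: refl_group.induct)
      case id_in
      then show ?case by (auto intro!: image_eqI[where x="[]"])
    next
      case (step g a)
      then obtain w where "w \<in> lists R" "g = wev w" by auto
      then show ?case using step by (auto intro!: image_eqI[where x="a # w"])
    qed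
  qed
  show "wev ` lists R \<subseteq> refl_group R"
  proof
    fix g assume "g \<in> wev ` lists R"
    then obtain w where w: "w \<in> lists R" "g = wev w" by auto
    have "wev w \<in> refl_group R" using w(1)
    proof (induction w)
      case Nil
      show ?case using refl_group.id_in by (simp add: id_def)
    next
      case (Cons a l)
      then show ?case using refl_group.step[of "wev l" R a] by (simp add: o_def)
    qed
    then show "g \<in> refl_group R" using w by simp
  qed
qed

lemma refl_group_mono: "R \<subseteq> S \<Longrightarrow> refl_group R \<subseteq> refl_group S"
  unfolding refl_group_wev by auto

lemma wev_linear: "linear (wev w)"
proof (induction w)
  case Nil
  then show ?case using bounded_linear.linear[OF bounded_linear_ident] by (simp add: id_def)
next
  case (Cons a w)
  then show ?case unfolding wev.simps by (rule linear_compose[OF _ refl_linear])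
qed

lemma wev_inner: "w \<in> lists R \<Longrightarrow> 0 \<notin> R \<Longrightarrow> wev w u \<bullet> wev w v = u \<bullet> v"
proof (induction w arbitrary: u v)
  case (Cons a w)
  then have "a \<noteq> 0" by auto
  then show ?case using Cons by (simp add: refl_inner)
qed simp

lemma wev_rev_left: "w \<in> lists R \<Longrightarrow> 0 \<notin> R \<Longrightarrow> wev (rev w) (wev w v) = v"
proof (induction w arbitrary: v)
  case (Cons a w)
  then have "a \<noteq> 0" by auto
  then show ?case using Cons by (simp add: wev_append refl_refl)
qed simp

lemma wev_rev_right: "w \<in> lists R \<Longrightarrow> 0 \<notin> R \<Longrightarrow> wev w (wev (rev w) v) = v"
proof -
  assume "w \<in> lists R" "0 \<notin> R"
  moreover have "rev w \<in> lists R" using \<open>w \<in> lists R\<close> by auto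
  ultimately show ?thesis using wev_rev_left[of "rev w" R v] by simp
qed

lemma wev_closed: "w \<in> lists R \<Longrightarrow> (\<And>a b. a \<in> R \<Longrightarrow> b \<in> R \<Longrightarrow> refl a b \<in> R) \<Longrightarrow> b \<in> R \<Longrightarrow> wev w b \<in> R"
  by (induction w arbitrary: b) auto

lemma refl_subspace: "subspace U \<Longrightarrow> a \<in> U \<Longrightarrow> v \<in> U \<Longrightarrow> refl a v \<in> U"
  unfolding refl_def by (simp add: subspace_diff subspace_scale)

lemma wev_subspace: "w \<in> lists U \<Longrightarrow> subspace U \<Longrightarrow> v \<in> U \<Longrightarrow> wev w v \<in> U"
  by (induction w arbitrary: v) (auto simp: refl_subspace)

lemma wev_inner_move: "w \<in> lists R \<Longrightarrow> 0 \<notin> R \<Longrightarrow> b \<bullet> wev w v = wev (rev w) b \<bullet> v"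
  by (metis wev_inner wev_rev_right set_rev in_lists_conv_set)



lemma small_eps:
  fixes X :: "(real \<times> real) set"
  assumes "finite X" "\<And>p q. (p, q) \<in> X \<Longrightarrow> p > 0"
  shows "\<exists>e>0. \<forall>(p, q)\<in>X. p + e * q > 0"
proof -
  define e where "e = Min (insert 1 ((\<lambda>(p, q). p / (\<bar>q\<bar> + 1)) ` X))"
  have fin: "finite (insert 1 ((\<lambda>(p, q). p / (\<bar>q\<bar> + 1)) ` X))" using assms(1) by simp
  have epos: "e > 0" unfolding e_def using fin assms(2)
    by (subst Min_gr_iff) (auto simp: add_pos_nonneg)
  have "p + e * q > 0" if pq: "(p, q) \<in> X" for p q
  proof -
    have "e \<le> p / (\<bar>q\<bar> + 1)" unfolding e_def using fin pq by (intro Min_le) force+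
    then have "e * (\<bar>q\<bar> + 1) \<le> p" by (simp add: field_simps add_pos_nonneg)
    then have "e * \<bar>q\<bar> < p" using epos by (simp add: algebra_simps)
    moreover have "- (e * \<bar>q\<bar>) \<le> e * q" using epos
      by (metis abs_ge_minus_self abs_mult abs_of_pos minus_le_iff)
    ultimately show ?thesis by linarith
  qed
  then show ?thesis using epos by auto
qed


lemma avoid_finite:
  fixes B :: "'a::euclidean_space set"
  assumes "subspace H" "finite B" "\<And>b. b \<in> B \<Longrightarrow> \<exists>d\<in>H. b \<bullet> d \<noteq> 0"
  shows "\<exists>d\<in>H. \<forall>b\<in>B. b \<bullet> d \<noteq> 0"
  using assms(2,3)
proof (induction B rule: finite_induct)
  case empty
  then show ?case using subspace_0[OF assms(1)] by auto
next
  case (insert b B)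
  then obtain d where d: "d \<in> H" "\<forall>b'\<in>B. b' \<bullet> d \<noteq> 0" by auto
  obtain e where e: "e \<in> H" "b \<bullet> e \<noteq> 0" using insert.prems by auto
  define bad where "bad = (\<lambda>b'. - (b' \<bullet> d) / (b' \<bullet> e)) ` insert b B"
  have "finite bad" unfolding bad_def using insert.hyps by simp
  then obtain t where t: "t \<notin> bad" using ex_new_if_finite[of bad] infinite_UNIV_char_0 by auto
  have "b' \<bullet> (d + t *\<^sub>R e) \<noteq> 0" if "b' \<in> insert b B" for b'
  proof (cases "b' \<bullet> e = 0")
    case True
    then have "b' \<in> B" using that e by auto
    then show ?thesis using True d by (simp add: inner_add_right)
  next
    case False
    have "t \<noteq> - (b' \<bullet> d) / (b' \<bullet> e)" using t that unfolding bad_def by auto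
    then show ?thesis using False by (auto simp: inner_add_right field_simps)
  qed
  moreover have "d + t *\<^sub>R e \<in> H" using d e assms(1) by (simp add: subspace_add subspace_scale)
  ultimately show ?case by blast
qed


lemma components_cover:
  fixes S :: "'a::real_normed_vector set" and \<C> :: "'a set set"
  assumes cov: "\<Union>\<C> = S"
    and ne: "\<And>C. C \<in> \<C> \<Longrightarrow> C \<noteq> {}"
    and cvx: "\<And>C. C \<in> \<C> \<Longrightarrow> convex C"
    and op: "\<And>C. C \<in> \<C> \<Longrightarrow> \<exists>W. open W \<and> C = S \<inter> W"
    and dis: "\<And>C C'. C \<in> \<C> \<Longrightarrow> C' \<in> \<C> \<Longrightarrow> C \<inter> C' \<noteq> {} \<Longrightarrow> C = C'"
  shows "components S = \<C>"
proof -
  have key: "connected_component_set S x = C" if C: "C \<in> \<C>" and x: "x \<in> C" for C x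
  proof
    show "C \<subseteq> connected_component_set S x"
    proof (rule connected_component_maximal[OF x convex_connected[OF cvx[OF C]]])
      show "C \<subseteq> S" using cov C by auto
    qed
    define T where "T = connected_component_set S x"
    obtain W where W: "open W" "C = S \<inter> W" using op C by blast
    define Wp where "Wp = \<Union>{P. open P \<and> (\<exists>C'\<in>\<C>. C' \<noteq> C \<and> C' = S \<inter> P)}"
    have "open Wp" unfolding Wp_def by auto
    have TS: "T \<subseteq> S" unfolding T_def by (rule connected_component_subset)
    have "T \<subseteq> W \<union> Wp"
    proof
      fix y assume "y \<in> T"
      then have "y \<in> S" using TS by auto
      then obtain C' where C': "C' \<in> \<C>" "y \<in> C'" using cov by auto
      show "y \<in> W \<union> Wp"
      proof (cases "C' = C")
        case True then show ?thesis using C' W by auto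
      next
        case False
        obtain P where P: "open P" "C' = S \<inter> P" using op C'(1) by blast
        then have "P \<in> {P. open P \<and> (\<exists>C'\<in>\<C>. C' \<noteq> C \<and> C' = S \<inter> P)}" using False C' by auto
        moreover have "y \<in> P" using P C' by auto
        ultimately show ?thesis unfolding Wp_def by (intro UnI2 UnionI)
      qed
    qed
    moreover have "W \<inter> Wp \<inter> T = {}"
    proof -
      have "y \<notin> W \<inter> Wp" if "y \<in> T" for y
      proof
        assume "y \<in> W \<inter> Wp"
        then obtain P where "P \<in> {P. open P \<and> (\<exists>C'\<in>\<C>. C' \<noteq> C \<and> C' = S \<inter> P)}" "y \<in> P" "y \<in> W"
          unfolding Wp_def by auto
        then obtain C' where P: "y \<in> P" "C' \<in> \<C>" "C' \<noteq> C" "C' = S \<inter> P" "y \<in> W"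
          by auto
        have "y \<in> C \<inter> C'" using P W that TS by auto
        then show False using dis[OF C P(2)] P(3) by auto
      qed
      then show ?thesis by auto
    qed
    moreover have "W \<inter> T \<noteq> {}"
    proof -
      have "x \<in> S" "x \<in> W" using x W by auto
      then have "x \<in> W \<inter> T" unfolding T_def by (simp add: connected_component_refl)
      then show ?thesis by blast
    qed
    moreover have "connected T" unfolding T_def by simp
    ultimately have "Wp \<inter> T = {}" using connectedD[of T W Wp, OF _ \<open>open W\<close> \<open>open Wp\<close>] by auto
    then show "T \<subseteq> C" using \<open>T \<subseteq> W \<union> Wp\<close> TS W by blast
  qed
  show ?thesis
  proof
    show "components S \<subseteq> \<C>"
    proof
      fix T assume "T \<in> components S"
      then obtain x where x: "x \<in> S" "T = connected_component_set S x" by (auto simp: components_iff)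
      then obtain C where "C \<in> \<C>" "x \<in> C" using cov by auto
      then show "T \<in> \<C>" using key x by auto
    qed
    show "\<C> \<subseteq> components S"
    proof
      fix C assume C: "C \<in> \<C>"
      then obtain x where "x \<in> C" using ne by blast
      then show "C \<in> components S" using key[OF C] C cov by (auto simp: components_iff)
    qed
  qed
qed



locale rsys =
  fixes R :: "'a::euclidean_space set" and U :: "'a set"
  assumes finR: "finite R" and zR: "0 \<notin> R"
    and clR: "\<And>a b. a \<in> R \<Longrightarrow> b \<in> R \<Longrightarrow> refl a b \<in> R"
    and subU: "subspace U" and RU: "R \<subseteq> U" and finG: "finite (refl_group R)"
begin

definition reg :: "'a \<Rightarrow> bool" where "reg v \<longleftrightarrow> v \<in> U \<and> (\<forall>b\<in>R. b \<bullet> v \<noteq> 0)"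
definition cham :: "'a \<Rightarrow> 'a set" where "cham y = {v \<in> U. \<forall>b\<in>R. (b \<bullet> v > 0 \<longleftrightarrow> b \<bullet> y > 0)}"
definition par :: "'a \<Rightarrow> 'a \<Rightarrow> bool" where "par b a \<longleftrightarrow> (\<exists>c. b = c *\<^sub>R a)"
definition wall :: "'a \<Rightarrow> 'a \<Rightarrow> bool" where
  "wall x \<alpha> \<longleftrightarrow> \<alpha> \<in> R \<and> \<alpha> \<bullet> x > 0 \<and>
     (\<exists>z\<in>U. \<alpha> \<bullet> z = 0 \<and> (\<forall>b\<in>R. \<not> par b \<alpha> \<longrightarrow> (b \<bullet> z > 0 \<longleftrightarrow> b \<bullet> x > 0)))"

lemma nzR: "b \<in> R \<Longrightarrow> b \<noteq> 0" using zR by auto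

lemma negR: "b \<in> R \<Longrightarrow> - b \<in> R"
  using clR[of b b] refl_self[OF nzR] by auto

lemma reg_neg: "reg y \<Longrightarrow> b \<in> R \<Longrightarrow> \<not> b \<bullet> y > 0 \<Longrightarrow> b \<bullet> y < 0"
  unfolding reg_def by (meson linorder_neqE_linordered_idom)

lemma cham_reg: assumes "reg y" "v \<in> cham y" shows "reg v"
  unfolding reg_def
proof (intro conjI ballI)
  show "v \<in> U" using assms unfolding cham_def by auto
  fix b assume b: "b \<in> R"
  show "b \<bullet> v \<noteq> 0"
  proof (cases "b \<bullet> y > 0")
    case True then show ?thesis using assms b unfolding cham_def by auto
  next
    case False
    then have "(- b) \<bullet> y > 0" using reg_neg[OF assms(1) b] by simp
    then have "(- b) \<bullet> v > 0" using assms negR[OF b] unfolding cham_def by blast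
    then show ?thesis by simp
  qed
qed

lemma cham_self: "reg y \<Longrightarrow> y \<in> cham y" unfolding cham_def reg_def by auto

lemma cham_eq: "v \<in> cham y \<Longrightarrow> cham v = cham y" unfolding cham_def by auto

lemma cham_convex: "convex (cham y)"
  unfolding convex_def
proof (intro ballI allI impI)
  fix u v and s t :: real assume u: "u \<in> cham y" and v: "v \<in> cham y" and st: "0 \<le> s" "0 \<le> t" "s + t = 1"
  have "s *\<^sub>R u + t *\<^sub>R v \<in> U" using u v subU unfolding cham_def by (simp add: subspace_add subspace_scale)
  moreover have "(b \<bullet> (s *\<^sub>R u + t *\<^sub>R v) > 0 \<longleftrightarrow> b \<bullet> y > 0)" if b: "b \<in> R" for b
  proof (cases "b \<bullet> y > 0")
    case True
    then have "b \<bullet> u > 0" "b \<bullet> v > 0" using u v b unfolding cham_def by auto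
    moreover have "s > 0 \<or> t > 0" using st by auto
    ultimately have "s * (b \<bullet> u) + t * (b \<bullet> v) > 0" using st
      by (metis add_pos_nonneg add_nonneg_pos mult_nonneg_nonneg mult_pos_pos less_imp_le)
    then show ?thesis using True by (simp add: inner_add_right)
  next
    case False
    then have "b \<bullet> u \<le> 0" "b \<bullet> v \<le> 0" using u v b unfolding cham_def by auto
    then have "s * (b \<bullet> u) + t * (b \<bullet> v) \<le> 0" using st
      by (simp add: add_nonpos_nonpos mult_nonneg_nonpos)
    then show ?thesis using False by (simp add: inner_add_right)
  qed
  ultimately show "s *\<^sub>R u + t *\<^sub>R v \<in> cham y" unfolding cham_def by auto
qed

lemma cham_open: assumes "reg y" shows "\<exists>W. open W \<and> cham y = Collect reg \<inter> W"
proof (intro exI conjI)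
  let ?W = "\<Inter>b\<in>{b\<in>R. b \<bullet> y > 0}. {v. b \<bullet> v > 0}"
  show "open ?W" using finR by (intro open_INT) (auto intro: open_halfspace_gt)
  show "cham y = Collect reg \<inter> ?W"
  proof
    show "cham y \<subseteq> Collect reg \<inter> ?W" using cham_reg[OF assms] unfolding cham_def by auto
    show "Collect reg \<inter> ?W \<subseteq> cham y"
    proof
      fix v assume v: "v \<in> Collect reg \<inter> ?W"
      have "b \<bullet> v > 0 \<longleftrightarrow> b \<bullet> y > 0" if b: "b \<in> R" for b
      proof
        assume "b \<bullet> v > 0"
        show "b \<bullet> y > 0"
        proof (rule ccontr)
          assume "\<not> b \<bullet> y > 0"
          then have "(- b) \<bullet> y > 0" using reg_neg[OF assms b] by simp
          then have "(-b) \<bullet> v > 0" using v negR[OF b] by auto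
          then show False using \<open>b \<bullet> v > 0\<close> by simp
        qed
      qed (use v b in auto)
      then show "v \<in> cham y" using v unfolding cham_def reg_def by auto
    qed
  qed
qed

lemma wevR: "w \<in> lists R \<Longrightarrow> b \<in> R \<Longrightarrow> wev w b \<in> R" using wev_closed clR by blast

lemma wevR_rev: "w \<in> lists R \<Longrightarrow> b \<in> R \<Longrightarrow> wev (rev w) b \<in> R"
  by (rule wevR) auto

lemma lists_RU: "w \<in> lists R \<Longrightarrow> w \<in> lists U" using RU by auto

lemma wev_reg: assumes "w \<in> lists R" "reg v" shows "reg (wev w v)"
  unfolding reg_def
proof (intro conjI ballI)
  show "wev w v \<in> U" using wev_subspace[OF lists_RU[OF assms(1)] subU] assms(2) unfolding reg_def by auto
  fix b assume b: "b \<in> R"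
  have "b \<bullet> wev w v = wev (rev w) b \<bullet> v" using wev_inner_move[OF assms(1) zR] .
  moreover have "wev (rev w) b \<in> R" using wevR_rev assms(1) b by auto
  ultimately show "b \<bullet> wev w v \<noteq> 0" using assms(2) unfolding reg_def by auto
qed

lemma wev_cham: assumes "w \<in> lists R" "v \<in> cham y" shows "wev w v \<in> cham (wev w y)"
proof -
  have "wev w v \<in> U" using wev_subspace[OF lists_RU[OF assms(1)] subU] assms(2) unfolding cham_def by auto
  moreover have "b \<bullet> wev w v > 0 \<longleftrightarrow> b \<bullet> wev w y > 0" if b: "b \<in> R" for b
  proof -
    have "wev (rev w) b \<in> R" using wevR_rev assms(1) b by auto
    then show ?thesis using assms(2) wev_inner_move[OF assms(1) zR] unfolding cham_def by auto
  qed
  ultimately show ?thesis unfolding cham_def by auto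
qed

end



locale based = rsys +
  fixes x assumes xreg: "reg x"
begin

abbreviation W where "W \<equiv> Collect (wall x)"

lemma W_R: "w \<in> lists W \<Longrightarrow> w \<in> lists R" unfolding wall_def by auto

lemma par_neg: "par (- b) a \<longleftrightarrow> par b a"
  unfolding par_def by (metis minus_minus scaleR_minus_left)

lemma refl_scaled_par: assumes "par b a" "b \<noteq> 0" shows "refl b = refl a"
proof -
  obtain c where c: "b = c *\<^sub>R a" using assms(1) unfolding par_def by auto
  then have "c \<noteq> 0" using assms(2) by auto
  then show ?thesis using c refl_scale by simp
qed

lemma lemmaA:
  assumes wa: "wall x \<alpha>" and b: "b \<in> R" "b \<bullet> x > 0" and n: "refl \<alpha> b \<bullet> x < 0"
  shows "par b \<alpha>"
proof (rule ccontr)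
  assume np: "\<not> par b \<alpha>"
  obtain z where z: "z \<in> U" "\<alpha> \<bullet> z = 0" "\<forall>b\<in>R. \<not> par b \<alpha> \<longrightarrow> (b \<bullet> z > 0 \<longleftrightarrow> b \<bullet> x > 0)"
    using wa unfolding wall_def by auto
  have aR: "\<alpha> \<in> R" using wa unfolding wall_def by auto
  have rbR: "refl \<alpha> b \<in> R" using clR[OF aR b(1)] .
  have "\<not> par (refl \<alpha> b) \<alpha>"
  proof
    assume "par (refl \<alpha> b) \<alpha>"
    then obtain c where c: "refl \<alpha> b = c *\<^sub>R \<alpha>" unfolding par_def by auto
    have "b = refl \<alpha> (refl \<alpha> b)" using refl_refl[OF nzR[OF aR]] by simp
    also have "\<dots> = c *\<^sub>R refl \<alpha> \<alpha>" using c linear_scale[OF refl_linear] by simp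
    also have "\<dots> = (- c) *\<^sub>R \<alpha>" using refl_self[OF nzR[OF aR]] by simp
    finally show False using np unfolding par_def by (metis scaleR_minus_left)
  qed
  then have "refl \<alpha> b \<bullet> z > 0 \<longleftrightarrow> refl \<alpha> b \<bullet> x > 0" using z(3) rbR by auto
  moreover have "refl \<alpha> b \<bullet> z = b \<bullet> z - (2 * (b \<bullet> \<alpha>) / (\<alpha> \<bullet> \<alpha>)) * (\<alpha> \<bullet> z)"
    unfolding refl_def by (simp add: inner_diff_left)
  then have "refl \<alpha> b \<bullet> z = b \<bullet> z" using z(2) by simp
  moreover have "b \<bullet> z > 0" using z(3) np b by auto
  ultimately show False using n by auto
qed

lemma lemmaD:
  assumes "\<beta> \<in> R" "\<beta> \<bullet> x > 0"
  shows "w \<in> lists W \<Longrightarrow> wev w \<beta> \<bullet> x < 0 \<Longrightarrow> \<exists>w'\<in>lists W. length w' + 1 = length w \<and> wev w' = wev w \<circ> refl \<beta>"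
proof (induction w)
  case Nil
  then show ?case using assms(2) by simp
next
  case (Cons \<alpha> v)
  have wa: "wall x \<alpha>" and v: "v \<in> lists W" using Cons.prems by auto
  show ?case
  proof (cases "wev v \<beta> \<bullet> x < 0")
    case True
    then obtain v' where v': "v' \<in> lists W" "length v' + 1 = length v" "wev v' = wev v \<circ> refl \<beta>"
      using Cons.IH[OF v True] by blast
    show ?thesis
      by (rule bexI[where x="\<alpha> # v'"]) (use v' wa in \<open>auto simp: o_assoc\<close>)
  next
    case False
    have vR: "v \<in> lists R" using W_R[OF v] .
    have bR: "wev v \<beta> \<in> R" using wevR[OF vR assms(1)] .
    have pos: "wev v \<beta> \<bullet> x > 0" using False reg_neg[OF xreg bR] by blast
    have "refl \<alpha> (wev v \<beta>) \<bullet> x < 0" using Cons.prems(2) by simp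
    then have p: "par (wev v \<beta>) \<alpha>" using lemmaA[OF wa bR pos] by simp
    have rr: "refl (wev v \<beta>) = refl \<alpha>" using refl_scaled_par[OF p nzR[OF bR]] .
    have conj: "wev v \<circ> refl \<beta> = refl \<alpha> \<circ> wev v"
    proof
      fix u
      have "refl (wev v \<beta>) (wev v u) = wev v (refl \<beta> u)"
        by (rule refl_conj[OF wev_linear wev_inner[OF vR zR]])
      then show "(wev v \<circ> refl \<beta>) u = (refl \<alpha> \<circ> wev v) u" using rr by simp
    qed
    have aR: "\<alpha> \<in> R" using wa unfolding wall_def by auto
    have "wev (\<alpha> # v) \<circ> refl \<beta> = refl \<alpha> \<circ> (refl \<alpha> \<circ> wev v)" using conj by (simp add: comp_assoc)
    also have "\<dots> = wev v" using refl_refl[OF nzR[OF aR]] by (auto simp: fun_eq_iff)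
    finally have "wev (\<alpha> # v) \<circ> refl \<beta> = wev v" .
    then show ?thesis using v by (intro bexI[where x=v]) (auto simp: comp_def)
  qed
qed

lemma free:
  assumes "w \<in> lists W" "wev w x \<in> cham x"
  shows "wev w = id"
  using assms
proof (induction "length w" arbitrary: w rule: less_induct)
  case less
  show ?case
  proof (cases w rule: rev_exhaust)
    case Nil
    then show ?thesis by simp
  next
    case (snoc u \<alpha>)
    have wR: "w \<in> lists R" using W_R[OF less.prems(1)] .
    have uW: "u \<in> lists W" and wa: "wall x \<alpha>" using less.prems(1) snoc by auto
    have aR: "\<alpha> \<in> R" using wa unfolding wall_def by auto
    define P where "P = {b\<in>R. b \<bullet> x > 0}"
    define f where "f = wev (rev w)"
    have fP: "f ` P \<subseteq> P"
    proof
      fix c assume "c \<in> f ` P"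
      then obtain b where b: "b \<in> P" "c = f b" by auto
      have "c \<in> R" using b wevR_rev[OF wR] unfolding P_def f_def by auto
      moreover have "c \<bullet> x = b \<bullet> wev w x" using b wev_inner_move[OF wR zR] unfolding f_def by simp
      moreover have "b \<bullet> wev w x > 0" using less.prems(2) b unfolding cham_def P_def by auto
      ultimately show "c \<in> P" unfolding P_def by auto
    qed
    have "inj_on f P"
      by (rule inj_on_inverseI[where g="wev w"]) (use wev_rev_right[OF wR zR] in \<open>simp add: f_def\<close>)
    then have "f ` P = P" using endo_inj_surj[OF _ fP] finR unfolding P_def by auto
    moreover have "\<alpha> \<in> P" using wa unfolding wall_def P_def by auto
    ultimately obtain b where b: "b \<in> P" "\<alpha> = f b" by force
    have "wev w \<alpha> = b" using b wev_rev_right[OF wR zR] unfolding f_def by simp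
    then have gpos: "wev w \<alpha> \<bullet> x > 0" using b unfolding P_def by auto
    have "wev w \<alpha> = wev u (refl \<alpha> \<alpha>)" using snoc by (simp add: wev_append)
    also have "\<dots> = - wev u \<alpha>" using refl_self[OF nzR[OF aR]] linear_neg[OF wev_linear] by simp
    finally have "wev u \<alpha> \<bullet> x < 0" using gpos by simp
    then obtain u' where u': "u' \<in> lists W" "length u' + 1 = length u" "wev u' = wev u \<circ> refl \<alpha>"
      using lemmaD[OF aR _ uW] wa unfolding wall_def by auto
    have eq: "wev u' = wev w" using u'(3) snoc by (simp add: wev_append)
    have "length u' < length w" using u'(2) snoc by simp
    then have "wev u' = id" using less.hyps[of u'] u'(1) less.prems(2) eq by simp
    then show ?thesis using eq by simp
  qed
qed

end



context based begin

lemma perp_dir: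
  assumes a: "a \<in> R" and b: "b \<in> R" and np: "\<not> par b a"
  shows "\<exists>d\<in>{u \<in> U. a \<bullet> u = 0}. b \<bullet> d \<noteq> 0"
proof -
  define d where "d = b - ((b \<bullet> a) / (a \<bullet> a)) *\<^sub>R a"
  have an: "a \<bullet> a \<noteq> 0" using nzR[OF a] by simp
  have "a \<in> U" "b \<in> U" using RU a b by auto
  then have dU: "d \<in> U" unfolding d_def by (intro subspace_diff[OF subU] subspace_scale[OF subU])
  have ad: "a \<bullet> d = 0" unfolding d_def using an by (simp add: inner_diff_right inner_commute)
  have "d \<noteq> 0" using np unfolding d_def par_def by auto
  moreover have "b \<bullet> d = d \<bullet> d"
  proof -
    have "b = d + ((b \<bullet> a) / (a \<bullet> a)) *\<^sub>R a" unfolding d_def by simp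
    then have "b \<bullet> d = d \<bullet> d + ((b \<bullet> a) / (a \<bullet> a)) * (a \<bullet> d)"
      by (metis inner_add_left inner_scaleR_left)
    then show ?thesis using ad by simp
  qed
  ultimately show ?thesis using dU ad by auto
qed

lemma hyp_sub: "subspace {u \<in> U. a \<bullet> u = 0}"
  using subU unfolding subspace_def by (auto simp: inner_add_right)

lemma generic_in_hyp:
  assumes a: "a \<in> R"
  shows "\<exists>d\<in>{u \<in> U. a \<bullet> u = 0}. \<forall>b\<in>{b\<in>R. \<not> par b a}. b \<bullet> d \<noteq> 0"
  by (rule avoid_finite[OF hyp_sub]) (use finR perp_dir[OF a] in auto)

lemma walls_determine:
  assumes y: "reg y" and wy: "\<And>\<alpha>. wall x \<alpha> \<Longrightarrow> \<alpha> \<bullet> y > 0"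
  shows "y \<in> cham x"
proof -
  define P where "P = {b\<in>R. b \<bullet> x > 0}"
  define Q where "Q = (\<lambda>S. \<forall>v\<in>U. (\<forall>\<beta>\<in>S. \<beta> \<bullet> v > 0) \<longrightarrow> (\<forall>b\<in>P. b \<bullet> v > 0))"
  define SS where "SS = {S. S \<subseteq> P \<and> Q S}"
  have finP: "finite P" using finR unfolding P_def by auto
  have "finite SS" unfolding SS_def using finP by auto
  moreover have "P \<in> SS" unfolding SS_def Q_def by auto
  ultimately obtain S0 where S0: "S0 \<in> SS" "\<not> (\<exists>S\<in>SS. card S < card S0)"
    using ex_is_arg_min_if_finite[of SS card] unfolding is_arg_min_def by blast
  have S0P: "S0 \<subseteq> P" and QS0: "Q S0" using S0(1) unfolding SS_def by auto
  have finS0: "finite S0" using S0P finP finite_subset by auto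
  have allwall: "wall x \<alpha>" if aS: "\<alpha> \<in> S0" for \<alpha>
  proof -
    define S1 where "S1 = S0 - {\<alpha>}"
    have "card S0 > 0" using aS finS0 card_gt_0_iff by auto
    then have "card S1 < card S0" unfolding S1_def using aS finS0 by simp
    then have "S1 \<notin> SS" using S0(2) by auto
    then have "\<not> Q S1" unfolding SS_def S1_def using S0P by auto
    then obtain v where v: "v \<in> U" "\<forall>\<beta>\<in>S1. \<beta> \<bullet> v > 0" "\<exists>b\<in>P. \<not> b \<bullet> v > 0"
      unfolding Q_def by auto
    have aR: "\<alpha> \<in> R" and ax: "\<alpha> \<bullet> x > 0" using aS S0P unfolding P_def by auto
    have av: "\<alpha> \<bullet> v \<le> 0"
    proof (rule ccontr)
      assume "\<not> \<alpha> \<bullet> v \<le> 0"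
      then have "\<forall>\<beta>\<in>S0. \<beta> \<bullet> v > 0" using v(2) unfolding S1_def by auto
      then show False using QS0 v unfolding Q_def by auto
    qed
    define w where "w = (\<alpha> \<bullet> x) *\<^sub>R v + (- (\<alpha> \<bullet> v)) *\<^sub>R x"
    have xU: "x \<in> U" using xreg unfolding reg_def by auto
    have wU: "w \<in> U" unfolding w_def by (intro subspace_add[OF subU] subspace_scale[OF subU] v(1) xU)
    have aw: "\<alpha> \<bullet> w = 0" unfolding w_def by (simp add: inner_add_right inner_diff_right algebra_simps)
    have S1w: "\<beta> \<bullet> w > 0" if "\<beta> \<in> S1" for \<beta>
    proof -
      have "\<beta> \<bullet> v > 0" "\<beta> \<bullet> x > 0" using that v(2) S0P unfolding S1_def P_def by auto
      then have "(\<alpha> \<bullet> x) * (\<beta> \<bullet> v) > 0" "(- (\<alpha> \<bullet> v)) * (\<beta> \<bullet> x) \<ge> 0" using ax av by (auto simp: mult_nonpos_nonneg)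
      then show ?thesis unfolding w_def by (simp add: inner_add_right inner_diff_right)
    qed
    obtain d where d: "d \<in> U" "\<alpha> \<bullet> d = 0" "\<forall>b\<in>R. \<not> par b \<alpha> \<longrightarrow> b \<bullet> d \<noteq> 0"
      using generic_in_hyp[OF aR] by auto
    define X where "X = (\<lambda>\<beta>. (\<beta> \<bullet> w, \<beta> \<bullet> d)) ` S1 \<union> (\<lambda>b. ((b \<bullet> w)\<^sup>2, (b \<bullet> w) * (b \<bullet> d))) ` {b\<in>R. b \<bullet> w \<noteq> 0}"
    have "finite X" unfolding X_def using finS0 finR unfolding S1_def by auto
    moreover have "p > 0" if "(p, q) \<in> X" for p q using that S1w unfolding X_def by auto
    ultimately obtain e where e: "e > 0" "\<forall>(p, q)\<in>X. p + e * q > 0" using small_eps by blast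
    define z where "z = w + e *\<^sub>R d"
    have zU: "z \<in> U" unfolding z_def by (intro subspace_add[OF subU] subspace_scale[OF subU] wU d(1))
    have az: "\<alpha> \<bullet> z = 0" unfolding z_def using aw d(2) by (simp add: inner_add_right)
    have S1z: "\<beta> \<bullet> z > 0" if "\<beta> \<in> S1" for \<beta>
    proof -
      have "(\<beta> \<bullet> w, \<beta> \<bullet> d) \<in> X" unfolding X_def using that by auto
      then show ?thesis using e(2) unfolding z_def by (auto simp: inner_add_right)
    qed
    have znz: "b \<bullet> z \<noteq> 0" if b: "b \<in> R" "\<not> par b \<alpha>" for b
    proof (cases "b \<bullet> w = 0")
      case True
      then show ?thesis unfolding z_def using d(3) b e(1) by (simp add: inner_add_right)
    next
      case False
      then have "((b \<bullet> w)\<^sup>2, (b \<bullet> w) * (b \<bullet> d)) \<in> X" unfolding X_def using b by auto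
      then have "(b \<bullet> w)\<^sup>2 + e * ((b \<bullet> w) * (b \<bullet> d)) > 0" using e(2) by auto
      then have "(b \<bullet> w) * (b \<bullet> z) > 0" unfolding z_def
        by (simp add: inner_add_right power2_eq_square algebra_simps)
      then show ?thesis by auto
    qed
    define X2 where "X2 = (\<lambda>b. ((b \<bullet> z)\<^sup>2, (b \<bullet> z) * (b \<bullet> \<alpha>))) ` {b\<in>R. \<not> par b \<alpha>}"
    have "finite X2" unfolding X2_def using finR by auto
    moreover have "p > 0" if "(p, q) \<in> X2" for p q using that znz unfolding X2_def by auto
    ultimately obtain e2 where e2: "e2 > 0" "\<forall>(p, q)\<in>X2. p + e2 * q > 0" using small_eps by blast
    define z' where "z' = z + e2 *\<^sub>R \<alpha>"
    have z'U: "z' \<in> U" unfolding z'_def using RU aR by (intro subspace_add[OF subU] subspace_scale[OF subU] zU) auto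
    have same: "(b \<bullet> z) * (b \<bullet> z') > 0" if b: "b \<in> R" "\<not> par b \<alpha>" for b
    proof -
      have "((b \<bullet> z)\<^sup>2, (b \<bullet> z) * (b \<bullet> \<alpha>)) \<in> X2" unfolding X2_def using b by auto
      then have "(b \<bullet> z)\<^sup>2 + e2 * ((b \<bullet> z) * (b \<bullet> \<alpha>)) > 0" using e2(2) by auto
      then show ?thesis unfolding z'_def by (simp add: inner_add_right power2_eq_square algebra_simps)
    qed
    have S1np: "\<not> par \<beta> \<alpha>" if "\<beta> \<in> S1" for \<beta>
    proof
      assume "par \<beta> \<alpha>"
      then obtain c where "\<beta> = c *\<^sub>R \<alpha>" unfolding par_def by auto
      then have "\<beta> \<bullet> z = 0" using az by simp
      then show False using S1z[OF that] by simp
    qed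
    have "\<forall>\<beta>\<in>S0. \<beta> \<bullet> z' > 0"
    proof
      fix \<beta> assume b: "\<beta> \<in> S0"
      show "\<beta> \<bullet> z' > 0"
      proof (cases "\<beta> = \<alpha>")
        case True
        have "\<alpha> \<bullet> \<alpha> > 0" using nzR[OF aR] by simp
        then show ?thesis using True az e2(1) unfolding z'_def by (simp add: inner_add_right)
      next
        case False
        then have b1: "\<beta> \<in> S1" unfolding S1_def using b by auto
        have bR: "\<beta> \<in> R" using b S0P unfolding P_def by auto
        have "(\<beta> \<bullet> z) * (\<beta> \<bullet> z') > 0" using same[OF bR S1np[OF b1]] .
        then show ?thesis using S1z[OF b1] by (simp add: zero_less_mult_iff)
      qed
    qed
    then have Pz': "\<forall>b\<in>P. b \<bullet> z' > 0" using QS0 z'U unfolding Q_def by auto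
    have posz: "b \<bullet> z > 0" if b: "b \<in> R" "\<not> par b \<alpha>" "b \<bullet> x > 0" for b
    proof -
      have "b \<bullet> z' > 0" using Pz' b unfolding P_def by auto
      then show ?thesis using same[OF b(1,2)] by (simp add: zero_less_mult_iff)
    qed
    have "b \<bullet> z > 0 \<longleftrightarrow> b \<bullet> x > 0" if b: "b \<in> R" "\<not> par b \<alpha>" for b
    proof
      assume bz: "b \<bullet> z > 0"
      show "b \<bullet> x > 0"
      proof (rule ccontr)
        assume "\<not> b \<bullet> x > 0"
        then have "(- b) \<bullet> x > 0" using reg_neg[OF xreg b(1)] by simp
        then have "(- b) \<bullet> z > 0" using posz[OF negR[OF b(1)]] b(2) par_neg by auto
        then show False using bz by simp
      qed
    qed (use posz b in auto)
    then show "wall x \<alpha>" unfolding wall_def using aR ax zU az by blast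
  qed
  have "\<forall>b\<in>P. b \<bullet> y > 0"
    using QS0 y allwall wy unfolding Q_def reg_def by auto
  moreover have "b \<bullet> x > 0" if b: "b \<in> R" "b \<bullet> y > 0" for b
  proof (rule ccontr)
    assume "\<not> b \<bullet> x > 0"
    then have "(- b) \<bullet> x > 0" using reg_neg[OF xreg b(1)] by simp
    then have "(- b) \<bullet> y > 0" using \<open>\<forall>b\<in>P. b \<bullet> y > 0\<close> negR[OF b(1)] unfolding P_def by auto
    then show False using b by simp
  qed
  ultimately show "y \<in> cham x"
    unfolding cham_def P_def using y unfolding reg_def by auto
qed

end



lemma refl_dist:
  fixes a u x :: "'a::euclidean_space"
  assumes "a \<noteq> 0"
  shows "(refl a u - x) \<bullet> (refl a u - x) = (u - x) \<bullet> (u - x) + 4 * (u \<bullet> a) * (x \<bullet> a) / (a \<bullet> a)"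
proof -
  define k where "k = 2 * (u \<bullet> a) / (a \<bullet> a)"
  have aa: "a \<bullet> a \<noteq> 0" using assms by simp
  have e: "refl a u - x = (u - x) - k *\<^sub>R a" unfolding refl_def k_def by simp
  have gen: "(p - k *\<^sub>R a) \<bullet> (p - k *\<^sub>R a) = p \<bullet> p - 2 * k * (p \<bullet> a) + k * k * (a \<bullet> a)" for p
    by (simp add: inner_diff_left inner_diff_right inner_commute algebra_simps)
  have "(refl a u - x) \<bullet> (refl a u - x) = (u - x) \<bullet> (u - x) - 2 * k * ((u - x) \<bullet> a) + k * k * (a \<bullet> a)"
    unfolding e by (rule gen)
  also have "k * k * (a \<bullet> a) = 2 * k * (u \<bullet> a)" unfolding k_def using aa by (simp add: field_simps)
  finally show ?thesis unfolding k_def using aa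
    by (simp add: inner_diff_left field_simps)
qed

context based begin

lemma trans_cham:
  assumes y: "reg y" shows "\<exists>w\<in>lists W. wev w y \<in> cham x"
proof -
  define G' where "G' = wev ` lists W"
  have "G' \<subseteq> refl_group R" unfolding G'_def refl_group_wev using W_R by auto
  then have finG': "finite G'" using finG finite_subset by auto
  have "id \<in> G'" unfolding G'_def by (auto intro!: image_eqI[where x="[]"])
  then have "G' \<noteq> {}" by auto
  define f where "f = (\<lambda>g. (g y - x) \<bullet> (g y - x))"
  obtain g where g: "g \<in> G'" "\<not> (\<exists>g'\<in>G'. f g' < f g)"
    using ex_is_arg_min_if_finite[OF finG' \<open>G' \<noteq> {}\<close>, of f] unfolding is_arg_min_def by blast
  obtain w where w: "w \<in> lists W" "g = wev w" using g(1) unfolding G'_def by auto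
  have gy: "reg (g y)" using wev_reg[OF W_R[OF w(1)] y] w by simp
  show ?thesis
  proof (rule ccontr)
    assume "\<not> ?thesis"
    then have "g y \<notin> cham x" using w by auto
    then obtain \<alpha> where wa: "wall x \<alpha>" and na: "\<not> \<alpha> \<bullet> g y > 0" using walls_determine[OF gy] by blast
    have aR: "\<alpha> \<in> R" and ax: "\<alpha> \<bullet> x > 0" using wa unfolding wall_def by auto
    have neg: "\<alpha> \<bullet> g y < 0" using reg_neg[OF gy aR] na by auto
    have "refl \<alpha> \<circ> g \<in> G'" unfolding G'_def using w wa by (auto intro!: image_eqI[where x="\<alpha> # w"])
    moreover have "f (refl \<alpha> \<circ> g) < f g"
    proof -
      have "f (refl \<alpha> \<circ> g) = f g + 4 * (g y \<bullet> \<alpha>) * (x \<bullet> \<alpha>) / (\<alpha> \<bullet> \<alpha>)"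
        unfolding f_def using refl_dist[OF nzR[OF aR]] by simp
      moreover have "4 * (g y \<bullet> \<alpha>) * (x \<bullet> \<alpha>) / (\<alpha> \<bullet> \<alpha>) < 0"
      proof -
        have "\<alpha> \<bullet> \<alpha> > 0" using nzR[OF aR] by simp
        moreover have "(g y \<bullet> \<alpha>) * (x \<bullet> \<alpha>) < 0" using neg ax by (simp add: inner_commute mult_neg_pos)
        moreover have "4 * (g y \<bullet> \<alpha>) * (x \<bullet> \<alpha>) < 0" using \<open>(g y \<bullet> \<alpha>) * (x \<bullet> \<alpha>) < 0\<close> by (simp add: mult.commute)
        ultimately show ?thesis by (simp add: divide_neg_pos)
      qed
      ultimately show ?thesis by simp
    qed
    ultimately show False using g(2) by auto
  qed
qed

lemma refl_in_W:
  assumes a: "a \<in> R" shows "\<exists>w\<in>lists W. wev w = refl a"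
proof -
  obtain z where z: "z \<in> U" "a \<bullet> z = 0" "\<forall>b\<in>R. \<not> par b a \<longrightarrow> b \<bullet> z \<noteq> 0"
    using generic_in_hyp[OF a] by auto
  define X where "X = (\<lambda>b. ((b \<bullet> z)\<^sup>2, (b \<bullet> z) * (b \<bullet> a))) ` {b\<in>R. \<not> par b a}"
  have "finite X" unfolding X_def using finR by auto
  moreover have "p > 0" if "(p, q) \<in> X" for p q using that z(3) unfolding X_def by auto
  ultimately obtain e where e: "e > 0" "\<forall>(p, q)\<in>X. p + e * q > 0" using small_eps by blast
  define x' where "x' = z + e *\<^sub>R a"
  have x'U: "x' \<in> U" unfolding x'_def using RU a by (intro subspace_add[OF subU] subspace_scale[OF subU] z(1)) auto
  have same: "(b \<bullet> z) * (b \<bullet> x') > 0" if b: "b \<in> R" "\<not> par b a" for b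
  proof -
    have "((b \<bullet> z)\<^sup>2, (b \<bullet> z) * (b \<bullet> a)) \<in> X" unfolding X_def using b by auto
    then have "(b \<bullet> z)\<^sup>2 + e * ((b \<bullet> z) * (b \<bullet> a)) > 0" using e(2) by auto
    then show ?thesis unfolding x'_def by (simp add: inner_add_right power2_eq_square algebra_simps)
  qed
  have x'reg: "reg x'" unfolding reg_def
  proof (intro conjI ballI x'U)
    fix b assume b: "b \<in> R"
    show "b \<bullet> x' \<noteq> 0"
    proof (cases "par b a")
      case True
      then obtain c where c: "b = c *\<^sub>R a" unfolding par_def by auto
      then have "c \<noteq> 0" using nzR[OF b] by auto
      moreover have "a \<bullet> a \<noteq> 0" using nzR[OF a] by simp
      moreover have "b \<bullet> x' = c * e * (a \<bullet> a)" unfolding x'_def c using z(2) by (simp add: inner_add_right)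
      ultimately show ?thesis using e(1) by simp
    next
      case False
      then have "(b \<bullet> z) * (b \<bullet> x') > 0" using same[OF b] by blast
      then show ?thesis by (metis mult_zero_right less_irrefl)
    qed
  qed
  obtain w where w: "w \<in> lists W" "wev w x' \<in> cham x" using trans_cham[OF x'reg] by auto
  have wR: "w \<in> lists R" using W_R[OF w(1)] .
  define h where "h = wev w"
  define a' where "a' = h a"
  have a'R: "a' \<in> R" unfolding a'_def h_def using wevR[OF wR a] .
  have hzU: "h z \<in> U" unfolding h_def using wev_subspace[OF lists_RU[OF wR] subU z(1)] .
  have a'z: "a' \<bullet> h z = 0" unfolding a'_def h_def using wev_inner[OF wR zR] z(2) by simp
  have sgn: "b \<bullet> h z > 0 \<longleftrightarrow> b \<bullet> x > 0" if b: "b \<in> R" "\<not> par b a'" for b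
  proof -
    define b' where "b' = wev (rev w) b"
    have b'R: "b' \<in> R" unfolding b'_def using wevR_rev[OF wR b(1)] .
    have np: "\<not> par b' a"
    proof
      assume "par b' a"
      then obtain c where c: "b' = c *\<^sub>R a" unfolding par_def by auto
      have "b = h b'" unfolding h_def b'_def using wev_rev_right[OF wR zR] by simp
      also have "\<dots> = c *\<^sub>R a'" unfolding c a'_def h_def by (rule linear_scale[OF wev_linear])
      finally show False using b(2) unfolding par_def by auto
    qed
    have e1: "b \<bullet> h z = b' \<bullet> z" unfolding h_def b'_def using wev_inner_move[OF wR zR] .
    have e2: "b \<bullet> h x' = b' \<bullet> x'" unfolding h_def b'_def using wev_inner_move[OF wR zR] .
    have e3: "b \<bullet> h x' > 0 \<longleftrightarrow> b \<bullet> x > 0" using w(2) b(1) unfolding h_def cham_def by auto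
    have "(b' \<bullet> z) * (b' \<bullet> x') > 0" using same[OF b'R np] .
    then have "b' \<bullet> z > 0 \<longleftrightarrow> b' \<bullet> x' > 0" by (auto simp: zero_less_mult_iff)
    then show ?thesis using e1 e2 e3 by simp
  qed
  obtain \<alpha> where wa: "wall x \<alpha>" and ra: "refl \<alpha> = refl a'"
  proof (cases "a' \<bullet> x > 0")
    case True
    have "wall x a'" unfolding wall_def
      by (intro conjI a'R True bexI[where x="h z"] hzU a'z) (use sgn in blast)+
    then show ?thesis using that by blast
  next
    case False
    then have "(- a') \<bullet> x > 0" using reg_neg[OF xreg a'R] by simp
    moreover have "(- a') \<bullet> h z = 0" using a'z by simp
    moreover have "\<forall>b\<in>R. \<not> par b (- a') \<longrightarrow> (b \<bullet> h z > 0 \<longleftrightarrow> b \<bullet> x > 0)"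
    proof (intro ballI impI)
      fix b assume "b \<in> R" "\<not> par b (- a')"
      moreover have "par b (- a') \<longleftrightarrow> par b a'"
      proof
        assume "par b (- a')"
        then obtain c where "b = c *\<^sub>R (- a')" unfolding par_def by blast
        then have "b = (- c) *\<^sub>R a'" by simp
        then show "par b a'" unfolding par_def by blast
      next
        assume "par b a'"
        then obtain c where "b = c *\<^sub>R a'" unfolding par_def by blast
        then have "b = (- c) *\<^sub>R (- a')" by simp
        then show "par b (- a')" unfolding par_def by blast
      qed
      ultimately show "b \<bullet> h z > 0 \<longleftrightarrow> b \<bullet> x > 0" using sgn by auto
    qed
    ultimately have "wall x (- a')" unfolding wall_def
      by (intro conjI negR[OF a'R] bexI[where x="h z"] hzU) auto
    moreover have "refl (- a') = refl a'" using refl_scale[of "-1" a'] by simp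
    ultimately show ?thesis using that by blast
  qed
  have "wev (rev w @ \<alpha> # w) = refl a"
  proof
    fix v
    have "wev (rev w @ \<alpha> # w) v = wev (rev w) (refl a' (h v))" unfolding h_def using ra by (simp add: wev_append)
    also have "refl a' (h v) = h (refl a v)" unfolding a'_def h_def
      by (rule refl_conj[OF wev_linear wev_inner[OF wR zR]])
    also have "wev (rev w) (h (refl a v)) = refl a v" unfolding h_def using wev_rev_left[OF wR zR] .
    finally show "wev (rev w @ \<alpha> # w) v = refl a v" .
  qed
  moreover have "rev w @ \<alpha> # w \<in> lists W" using w(1) wa by auto
  ultimately show ?thesis by blast
qed

lemma G_in_W: assumes "v \<in> lists R" shows "\<exists>w\<in>lists W. wev w = wev v"
  using assms
proof (induction v rule: list.induct)
  case Nil
  then show ?case by (auto intro!: bexI[where x="[]"])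
next
  case (Cons a v)
  have aR: "a \<in> R" using Cons.prems by auto
  obtain w1 where w1: "w1 \<in> lists W" "wev w1 = refl a" using refl_in_W[OF aR] by blast
  have "v \<in> lists R" using Cons.prems by auto
  then obtain w2 where w2: "w2 \<in> lists W" "wev w2 = wev v" using Cons.IH by auto
  have "wev (w1 @ w2) = wev (a # v)" using w1 w2 by (simp add: wev_append)
  then show ?case using w1 w2 by (intro bexI[where x="w1 @ w2"]) auto
qed

lemma card_chambers: "card (cham ` Collect reg) = card (refl_group R)"
proof -
  have "bij_betw (\<lambda>g. cham (g x)) (refl_group R) (cham ` Collect reg)"
    unfolding bij_betw_def
  proof (intro conjI)
    show "inj_on (\<lambda>g. cham (g x)) (refl_group R)"
    proof (rule inj_onI)
      fix g1 g2 assume g1: "g1 \<in> refl_group R" and g2: "g2 \<in> refl_group R" and eq: "cham (g1 x) = cham (g2 x)"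
      obtain w1 where w1: "w1 \<in> lists R" "g1 = wev w1" using g1 unfolding refl_group_wev by auto
      obtain w2 where w2: "w2 \<in> lists R" "g2 = wev w2" using g2 unfolding refl_group_wev by auto
      have "g1 x \<in> cham (g1 x)" using cham_self wev_reg[OF w1(1) xreg] w1(2) by simp
      then have "g1 x \<in> cham (g2 x)" using eq by simp
      moreover have "rev w2 \<in> lists R" using w2(1) by auto
      ultimately have "wev (rev w2) (g1 x) \<in> cham (wev (rev w2) (g2 x))"
        using wev_cham by blast
      then have hx: "wev (rev w2 @ w1) x \<in> cham x" using w1 w2 wev_rev_left[OF w2(1) zR] by (simp add: wev_append)
      have "rev w2 @ w1 \<in> lists R" using w1 w2 by auto
      then obtain u where u: "u \<in> lists W" "wev u = wev (rev w2 @ w1)" using G_in_W by blast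
      have "wev u = id" using free[OF u(1)] u(2) hx by simp
      then have hid: "wev (rev w2) (g1 v) = v" for v using u(2) w1 by (simp add: wev_append fun_eq_iff)
      show "g1 = g2"
      proof
        fix v
        have "g1 v = g2 (wev (rev w2) (g1 v))" using wev_rev_right[OF w2(1) zR] w2(2) by simp
        then show "g1 v = g2 v" using hid by simp
      qed
    qed
    show "(\<lambda>g. cham (g x)) ` refl_group R = cham ` Collect reg"
    proof
      show "(\<lambda>g. cham (g x)) ` refl_group R \<subseteq> cham ` Collect reg"
        unfolding refl_group_wev using wev_reg[OF _ xreg] by auto
      show "cham ` Collect reg \<subseteq> (\<lambda>g. cham (g x)) ` refl_group R"
      proof
        fix C assume "C \<in> cham ` Collect reg"
        then obtain y where y: "reg y" "C = cham y" by auto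
        obtain w where w: "w \<in> lists W" "wev w y \<in> cham x" using trans_cham[OF y(1)] by auto
        have wR: "w \<in> lists R" using W_R[OF w(1)] .
        have "rev w \<in> lists R" using wR by auto
        then have "wev (rev w) (wev w y) \<in> cham (wev (rev w) x)" using wev_cham w(2) by blast
        then have "y \<in> cham (wev (rev w) x)" using wev_rev_left[OF wR zR] by simp
        then have "C = cham (wev (rev w) x)" using cham_eq y by simp
        moreover have "wev (rev w) \<in> refl_group R" unfolding refl_group_wev using wR by auto
        ultimately show "C \<in> (\<lambda>g. cham (g x)) ` refl_group R" by auto
      qed
    qed
  qed
  then show ?thesis using bij_betw_same_card by metis
qed

end

context rsys begin

lemma exists_reg: "\<exists>x. reg x"
proof -
  have "\<exists>d\<in>U. \<forall>b\<in>R. b \<bullet> d \<noteq> 0"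
  proof (rule avoid_finite[OF subU finR])
    fix b assume b: "b \<in> R"
    then have "b \<in> U" "b \<bullet> b \<noteq> 0" using RU nzR[OF b] by auto
    then show "\<exists>d\<in>U. b \<bullet> d \<noteq> 0" by blast
  qed
  then show ?thesis unfolding reg_def by auto
qed

lemma chambers:
  shows "components (Collect reg) = cham ` Collect reg"
    and "card (cham ` Collect reg) = card (refl_group R)"
    and "\<And>C. C \<in> cham ` Collect reg \<Longrightarrow> convex C \<and> C \<noteq> {} \<and> (\<exists>W. open W \<and> C = Collect reg \<inter> W)"
proof -
  obtain x where x: "reg x" using exists_reg by auto
  interpret based R U x by unfold_locales (rule x)
  show "card (cham ` Collect reg) = card (refl_group R)" by (rule card_chambers)
  show props: "convex C \<and> C \<noteq> {} \<and> (\<exists>W. open W \<and> C = Collect reg \<inter> W)" if C: "C \<in> cham ` Collect reg" for C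
  proof -
    obtain y where y: "reg y" "C = cham y" using C by auto
    have "convex C" using y cham_convex by simp
    moreover have "C \<noteq> {}" using y cham_self[OF y(1)] by auto
    moreover have "\<exists>W. open W \<and> C = Collect reg \<inter> W" using y cham_open[OF y(1)] by simp
    ultimately show ?thesis by blast
  qed
  show "components (Collect reg) = cham ` Collect reg"
  proof (rule components_cover)
    show "\<Union> (cham ` Collect reg) = Collect reg"
    proof
      show "\<Union> (cham ` Collect reg) \<subseteq> Collect reg"
      proof
        fix v assume "v \<in> \<Union> (cham ` Collect reg)"
        then obtain y where "reg y" "v \<in> cham y" by auto
        then show "v \<in> Collect reg" using cham_reg by simp
      qed
      show "Collect reg \<subseteq> \<Union> (cham ` Collect reg)"
      proof
        fix v assume "v \<in> Collect reg"
        then have "reg v" "v \<in> cham v" using cham_self by auto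
        then show "v \<in> \<Union> (cham ` Collect reg)" by blast
      qed
    qed
    show "C = C'" if "C \<in> cham ` Collect reg" "C' \<in> cham ` Collect reg" "C \<inter> C' \<noteq> {}" for C C'
    proof -
      have CC: "C \<in> cham ` Collect reg" "C' \<in> cham ` Collect reg" "C \<inter> C' \<noteq> {}" by fact+
      obtain y y' where y: "C = cham y" "C' = cham y'" using CC by auto
      obtain v where "v \<in> cham y" "v \<in> cham y'" using CC y by auto
      then show ?thesis using cham_eq y by metis
    qed
    show "C \<noteq> {}" "convex C" "\<exists>W. open W \<and> C = Collect reg \<inter> W" if "C \<in> cham ` Collect reg" for C
      using props[OF that] by auto
  qed
qed

end



lemma product_components:
  fixes A B :: "'a::euclidean_space set"
  assumes cA: "\<And>C. C \<in> components A \<Longrightarrow> convex C \<and> (\<exists>W. open W \<and> C = A \<inter> W)"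
    and cB: "\<And>C. C \<in> components B \<Longrightarrow> convex C \<and> (\<exists>W. open W \<and> C = B \<inter> W)"
  shows "components (A \<times> B) = (\<lambda>(C, D). C \<times> D) ` (components A \<times> components B)"
    and "card (components (A \<times> B)) = card (components A) * card (components B)"
    and "\<And>K. K \<in> components (A \<times> B) \<Longrightarrow> convex K"
proof -
  show eq: "components (A \<times> B) = (\<lambda>(C, D). C \<times> D) ` (components A \<times> components B)"
  proof (rule components_cover)
    show "\<Union> ((\<lambda>(C, D). C \<times> D) ` (components A \<times> components B)) = A \<times> B"
    proof
      show "\<Union> ((\<lambda>(C, D). C \<times> D) ` (components A \<times> components B)) \<subseteq> A \<times> B"
      proof
        fix p assume "p \<in> \<Union> ((\<lambda>(C, D). C \<times> D) ` (components A \<times> components B))"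
        then obtain C D where "C \<in> components A" "D \<in> components B" "p \<in> C \<times> D" by auto
        moreover have "C \<subseteq> A" "D \<subseteq> B" using calculation(1,2) in_components_subset by auto
        ultimately show "p \<in> A \<times> B" by auto
      qed
      show "A \<times> B \<subseteq> \<Union> ((\<lambda>(C, D). C \<times> D) ` (components A \<times> components B))"
      proof
        fix p assume "p \<in> A \<times> B"
        then obtain u v where p: "p = (u, v)" "u \<in> A" "v \<in> B" by auto
        have "u \<in> \<Union>(components A)" using p(2) by simp
        then obtain C where C: "C \<in> components A" "u \<in> C" by blast
        have "v \<in> \<Union>(components B)" using p(3) by simp
        then obtain D where D: "D \<in> components B" "v \<in> D" by blast
        have "(C, D) \<in> components A \<times> components B" using C D by simp
        moreover have "p \<in> (\<lambda>(C, D). C \<times> D) (C, D)" using p(1) C D by simp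
        ultimately show "p \<in> \<Union> ((\<lambda>(C, D). C \<times> D) ` (components A \<times> components B))"
          by (rule UN_I)
      qed
    qed
  next
    fix K assume "K \<in> (\<lambda>(C, D). C \<times> D) ` (components A \<times> components B)"
    then obtain C D where K: "K = C \<times> D" "C \<in> components A" "D \<in> components B" by auto
    have "C \<noteq> {}" "D \<noteq> {}" using K in_components_nonempty by auto
    then show "K \<noteq> {}" using K by auto
    have "convex C" "convex D" using cA[OF K(2)] cB[OF K(3)] by auto
    then show "convex K" using K convex_Times by simp
    obtain W1 where W1: "open W1" "C = A \<inter> W1" using cA K(2) by blast
    obtain W2 where W2: "open W2" "D = B \<inter> W2" using cB K(3) by blast
    have "K = (A \<times> B) \<inter> (W1 \<times> W2)" using K W1 W2 by auto
    moreover have "open (W1 \<times> W2)" using W1 W2 by (simp add: open_Times)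
    ultimately show "\<exists>W. open W \<and> K = A \<times> B \<inter> W" by blast
  next
    fix K K' assume K: "K \<in> (\<lambda>(C, D). C \<times> D) ` (components A \<times> components B)"
      and K': "K' \<in> (\<lambda>(C, D). C \<times> D) ` (components A \<times> components B)" and ne: "K \<inter> K' \<noteq> {}"
    obtain C D where CD: "K = C \<times> D" "C \<in> components A" "D \<in> components B" using K by auto
    obtain C' D' where CD': "K' = C' \<times> D'" "C' \<in> components A" "D' \<in> components B" using K' by auto
    have "C \<inter> C' \<noteq> {}" "D \<inter> D' \<noteq> {}" using ne CD CD' by auto
    then have "C = C'" "D = D'" using components_eq[OF CD(2) CD'(2)] components_eq[OF CD(3) CD'(3)] by auto
    then show "K = K'" using CD CD' by simp
  qed
  have inj: "inj_on (\<lambda>(C, D). C \<times> D) (components A \<times> components B)"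
  proof (rule inj_onI, clarify)
    fix C D C' D' assume "C \<in> components A" "D \<in> components B" "C' \<in> components A" "D' \<in> components B"
      "C \<times> D = C' \<times> D'"
    moreover have "C \<noteq> {}" "D \<noteq> {}" using calculation in_components_nonempty by auto
    ultimately show "C = C' \<and> D = D'" using times_eq_iff[of C D C' D'] by simp
  qed
  show "card (components (A \<times> B)) = card (components A) * card (components B)"
    unfolding eq card_image[OF inj] card_cartesian_product ..
  show "convex K" if KK: "K \<in> components (A \<times> B)" for K
  proof -
    obtain C D where K: "K = C \<times> D" "C \<in> components A" "D \<in> components B" using KK unfolding eq by auto
    have "convex C" "convex D" using cA[OF K(2)] cB[OF K(3)] by auto
    then show "convex K" using K convex_Times by simp
  qed
qed



lemma orth_proj_eq:
  assumes S: "subspace S" and p: "p \<in> S" and o: "\<forall>w\<in>S. (v - p) \<bullet> w = 0"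
  shows "orth_proj S v = p"
  unfolding orth_proj_def
proof (rule the_equality)
  show "p \<in> S \<and> (\<forall>w\<in>S. (v - p) \<bullet> w = 0)" using p o by auto
  fix p' assume p': "p' \<in> S \<and> (\<forall>w\<in>S. (v - p') \<bullet> w = 0)"
  have d: "p - p' \<in> S" using p p' S by (simp add: subspace_diff)
  have "(p - p') \<bullet> (p - p') = (v - p') \<bullet> (p - p') - (v - p) \<bullet> (p - p')"
    by (simp add: inner_diff_left)
  also have "\<dots> = 0" using o p' d by simp
  finally show "p' = p" by simp
qed

theorem proposition8:
  fixes R :: "'a::euclidean_space set" and \<sigma> :: "'a \<Rightarrow> 'a"
  assumes "root_system R"
    and "finite (refl_group R)"
    and "special_involution R \<sigma>"
  shows "(\<forall>C \<in> components (conj_fixed_set R \<sigma>). contractible C)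
       \<and> card (components (conj_fixed_set R \<sigma>))
           = card (refl_group (R \<inter> minus_eigenspace \<sigma>)) * card (refl_group (R \<inter> plus_eigenspace \<sigma>))"
proof -
  have finR: "finite R" and zR: "0 \<notin> R" and clR: "\<And>a b. a \<in> R \<Longrightarrow> b \<in> R \<Longrightarrow> refl a b \<in> R"
    using assms(1) unfolding root_system_def by auto
  have sG: "\<sigma> \<in> refl_group R" and ss: "\<sigma> \<circ> \<sigma> = id" using assms(3) unfolding special_involution_def by auto
  obtain w where w: "w \<in> lists R" "\<sigma> = wev w" using sG unfolding refl_group_wev by auto
  have lin: "linear \<sigma>" using w wev_linear by simp
  have inn: "\<And>u v. \<sigma> u \<bullet> \<sigma> v = u \<bullet> v" using w wev_inner[OF w(1) zR] by simp
  have inv: "\<And>v. \<sigma> (\<sigma> v) = v" using ss by (simp add: fun_eq_iff)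
  define V1 where "V1 = minus_eigenspace \<sigma>"
  define V2 where "V2 = plus_eigenspace \<sigma>"
  have V1: "v \<in> V1 \<longleftrightarrow> \<sigma> v = - v" for v unfolding V1_def minus_eigenspace_def by simp
  have V2: "v \<in> V2 \<longleftrightarrow> \<sigma> v = v" for v unfolding V2_def plus_eigenspace_def by simp
  have sub1: "subspace V1" unfolding subspace_def
    by (intro conjI ballI allI) (simp_all add: V1 linear_0[OF lin] linear_add[OF lin] linear_scale[OF lin])
  have sub2: "subspace V2" unfolding subspace_def
    by (intro conjI ballI allI) (simp_all add: V2 linear_0[OF lin] linear_add[OF lin] linear_scale[OF lin])
  have orth: "u \<bullet> y = 0" if "u \<in> V2" "y \<in> V1" for u y
  proof -
    have "u \<bullet> y = \<sigma> u \<bullet> \<sigma> y" using inn by simp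
    also have "\<dots> = u \<bullet> (- y)"
    proof -
      have su: "\<sigma> u = u" using V2[THEN iffD1, OF that(1)] .
      have sy: "\<sigma> y = - y" using V1[THEN iffD1, OF that(2)] .
      show ?thesis unfolding su sy ..
    qed
    also have "\<dots> = - (u \<bullet> y)" by simp
    finally have "u \<bullet> y = - (u \<bullet> y)" .
    then show ?thesis by (rule equal_neg_zero[THEN iffD1])
  qed
  have inter0: "v = 0" if "v \<in> V1" "v \<in> V2" for v
  proof -
    have a1: "\<sigma> v = - v" using V1[THEN iffD1, OF that(1)] .
    have a2: "\<sigma> v = v" using V2[THEN iffD1, OF that(2)] .
    have "v = \<sigma> v" using a2 by (rule sym)
    also have "\<dots> = - v" by (rule a1)
    finally have vv: "v = - v" .
    have "(2::real) *\<^sub>R v = v + v" by (rule scaleR_2)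
    also have "\<dots> = v + - v" using arg_cong[OF vv, of "\<lambda>t. v + t"] .
    also have "\<dots> = 0" by (rule add.right_inverse)
    finally have "(2::real) *\<^sub>R v = 0" .
    then show ?thesis by (simp only: scaleR_eq_0_iff) simp
  qed
  have s1: "\<sigma> ((1/2) *\<^sub>R (a - \<sigma> a)) = - ((1/2) *\<^sub>R (a - \<sigma> a))" for a
  proof -
    have "\<sigma> ((1/2) *\<^sub>R (a - \<sigma> a)) = (1/2) *\<^sub>R (\<sigma> a - \<sigma> (\<sigma> a))"
      by (simp only: linear_scale[OF lin] linear_diff[OF lin])
    also have "\<dots> = (1/2) *\<^sub>R (\<sigma> a - a)" by (simp only: inv)
    also have "\<dots> = - ((1/2) *\<^sub>R (a - \<sigma> a))" by (simp add: algebra_simps)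
    finally show ?thesis .
  qed
  have s2: "\<sigma> ((1/2) *\<^sub>R (a + \<sigma> a)) = (1/2) *\<^sub>R (a + \<sigma> a)" for a
  proof -
    have "\<sigma> ((1/2) *\<^sub>R (a + \<sigma> a)) = (1/2) *\<^sub>R (\<sigma> a + \<sigma> (\<sigma> a))"
      by (simp only: linear_scale[OF lin] linear_add[OF lin])
    also have "\<dots> = (1/2) *\<^sub>R (\<sigma> a + a)" by (simp only: inv)
    also have "\<dots> = (1/2) *\<^sub>R (a + \<sigma> a)" by (simp add: algebra_simps)
    finally show ?thesis .
  qed
  have m1: "(1/2) *\<^sub>R (a - \<sigma> a) \<in> V1" for a using V1[THEN iffD2, OF s1] .
  have m2: "(1/2) *\<^sub>R (a + \<sigma> a) \<in> V2" for a using V2[THEN iffD2, OF s2] .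
  define R1 where "R1 = R \<inter> V1"
  define R2 where "R2 = R \<inter> V2"
  have rs1: "rsys R1 V1"
  proof
    show "finite R1" using finR unfolding R1_def by auto
    show "0 \<notin> R1" using zR unfolding R1_def by auto
    show "refl a b \<in> R1" if "a \<in> R1" "b \<in> R1" for a b
      using that clR refl_subspace[OF sub1] unfolding R1_def by auto
    show "subspace V1" by (rule sub1)
    show "R1 \<subseteq> V1" unfolding R1_def by auto
    show "finite (refl_group R1)"
      using assms(2) refl_group_mono[of R1 R] finite_subset unfolding R1_def by auto
  qed
  have rs2: "rsys R2 V2"
  proof
    show "finite R2" using finR unfolding R2_def by auto
    show "0 \<notin> R2" using zR unfolding R2_def by auto
    show "refl a b \<in> R2" if "a \<in> R2" "b \<in> R2" for a b
      using that clR refl_subspace[OF sub2] unfolding R2_def by auto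
    show "subspace V2" by (rule sub2)
    show "R2 \<subseteq> V2" unfolding R2_def by auto
    show "finite (refl_group R2)"
      using assms(2) refl_group_mono[of R2 R] finite_subset unfolding R2_def by auto
  qed
  interpret r1: rsys R1 V1 by (rule rs1)
  interpret r2: rsys R2 V2 by (rule rs2)
  have proj1: "orth_proj V1 a = (1/2) *\<^sub>R (a - \<sigma> a)" for a
  proof (rule orth_proj_eq[OF sub1])
    show "(1/2) *\<^sub>R (a - \<sigma> a) \<in> V1" by (rule m1)
    have "a - (1/2) *\<^sub>R (a - \<sigma> a) = (1/2) *\<^sub>R (a + \<sigma> a)" by (simp add: algebra_simps flip: scaleR_add_left)
    moreover have "(1/2) *\<^sub>R (a + \<sigma> a) \<in> V2" by (rule m2)
    ultimately show "\<forall>v\<in>V1. (a - (1/2) *\<^sub>R (a - \<sigma> a)) \<bullet> v = 0"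
      using orth by (simp only:) blast
  qed
  have proj2: "orth_proj V2 a = (1/2) *\<^sub>R (a + \<sigma> a)" for a
  proof (rule orth_proj_eq[OF sub2])
    show "(1/2) *\<^sub>R (a + \<sigma> a) \<in> V2" by (rule m2)
    have "a - (1/2) *\<^sub>R (a + \<sigma> a) = (1/2) *\<^sub>R (a - \<sigma> a)" by (simp add: algebra_simps flip: scaleR_add_left)
    moreover have "(1/2) *\<^sub>R (a - \<sigma> a) \<in> V1" by (rule m1)
    ultimately show "\<forall>v\<in>V2. (a - (1/2) *\<^sub>R (a + \<sigma> a)) \<bullet> v = 0"
      using orth by (simp only: inner_commute[of _ "_::'a"]) blast
  qed
  have F: "conj_fixed_set R \<sigma> = Collect r2.reg \<times> Collect r1.reg"
  proof
    show "conj_fixed_set R \<sigma> \<subseteq> Collect r2.reg \<times> Collect r1.reg"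
    proof
      fix p assume "p \<in> conj_fixed_set R \<sigma>"
      then obtain x y where p: "p = (x, y)" and xy: "(x, y) \<in> conj_fixed_set R \<sigma>" by (cases p) auto
      from xy have x2: "x \<in> V2" and y1: "y \<in> V1" and hc: "\<forall>a\<in>R. \<not> (a \<bullet> x = 0 \<and> a \<bullet> y = 0)"
        unfolding conj_fixed_set_def hyperplane_complement_def V1 V2 by (auto simp: minus_equation_iff)
      have "r2.reg x" unfolding r2.reg_def using x2 hc orth y1 by (auto simp: R2_def)
      moreover have "r1.reg y" unfolding r1.reg_def
      proof (intro conjI ballI y1)
        fix b assume "b \<in> R1"
        then have bR: "b \<in> R" and b1: "b \<in> V1" by (auto simp: R1_def)
        have "x \<bullet> b = 0" using orth[OF x2 b1] .
        then have "b \<bullet> x = 0" by (simp add: inner_commute)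
        then show "b \<bullet> y \<noteq> 0" using hc bR by auto
      qed
      ultimately show "p \<in> Collect r2.reg \<times> Collect r1.reg" using p by simp
    qed
    show "Collect r2.reg \<times> Collect r1.reg \<subseteq> conj_fixed_set R \<sigma>"
    proof
      fix p assume "p \<in> Collect r2.reg \<times> Collect r1.reg"
      then obtain x y where p: "p = (x, y)" and x: "r2.reg x" and y: "r1.reg y" by auto
      have x2: "x \<in> V2" and x': "\<forall>b\<in>R2. b \<bullet> x \<noteq> 0" using x unfolding r2.reg_def by auto
      have y1: "y \<in> V1" and y': "\<forall>b\<in>R1. b \<bullet> y \<noteq> 0" using y unfolding r1.reg_def by auto
      have "\<not> (a \<bullet> x = 0 \<and> a \<bullet> y = 0)" if a: "a \<in> R" for a
      proof -
        define p1 where "p1 = (1/2) *\<^sub>R (a - \<sigma> a)"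
        define p2 where "p2 = (1/2) *\<^sub>R (a + \<sigma> a)"
        have p1V: "p1 \<in> V1" unfolding p1_def by (rule m1)
        have p2V: "p2 \<in> V2" unfolding p2_def by (rule m2)
        have asum: "a = p1 + p2" unfolding p1_def p2_def by (simp add: algebra_simps flip: scaleR_add_left)
        have o1: "x \<bullet> p1 = 0" using orth[OF x2 p1V] .
        have "a \<bullet> x = p1 \<bullet> x + p2 \<bullet> x" unfolding asum by (rule inner_add_left)
        also have "p1 \<bullet> x = 0" using o1 by (simp only: inner_commute)
        finally have ax: "a \<bullet> x = p2 \<bullet> x" by simp
        have ay: "a \<bullet> y = p1 \<bullet> y" using asum orth[OF p2V y1] by (simp add: inner_add_left)
        have sp: "proportional_to_root p1 (R1 \<union> R2) \<or> proportional_to_root p2 (R1 \<union> R2)"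
          using assms(3) a proj1 proj2 unfolding special_involution_def R1_def R2_def V1_def V2_def p1_def p2_def
          by auto
        then show ?thesis
        proof
          assume "proportional_to_root p1 (R1 \<union> R2)"
          then obtain b c where bc: "b \<in> R1 \<union> R2" "p1 = c *\<^sub>R b" unfolding proportional_to_root_def by auto
          show ?thesis
          proof (cases "b \<in> R1 \<and> c \<noteq> 0")
            case True
            then have "a \<bullet> y = c * (b \<bullet> y)" using ay bc by simp
            then show ?thesis using True y' by simp
          next
            case False
            then have "p1 \<in> V2"
            proof (cases "c = 0")
              case True then show ?thesis using bc subspace_0[OF sub2] by simp
            next
              case False
              then have "b \<in> R2" using \<open>\<not> (b \<in> R1 \<and> c \<noteq> 0)\<close> bc by auto
              then show ?thesis using bc subspace_scale[OF sub2] unfolding R2_def by auto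
            qed
            then have "p1 = 0" using inter0 p1V by simp
            then have "a \<in> R2" using asum p2V a unfolding R2_def by simp
            then show ?thesis using x' by auto
          qed
        next
          assume "proportional_to_root p2 (R1 \<union> R2)"
          then obtain b c where bc: "b \<in> R1 \<union> R2" "p2 = c *\<^sub>R b" unfolding proportional_to_root_def by auto
          show ?thesis
          proof (cases "b \<in> R2 \<and> c \<noteq> 0")
            case True
            then have "a \<bullet> x = c * (b \<bullet> x)" using ax bc by simp
            then show ?thesis using True x' by simp
          next
            case False
            then have "p2 \<in> V1"
            proof (cases "c = 0")
              case True then show ?thesis using bc subspace_0[OF sub1] by simp
            next
              case False
              then have "b \<in> R1" using \<open>\<not> (b \<in> R2 \<and> c \<noteq> 0)\<close> bc by auto
              then show ?thesis using bc subspace_scale[OF sub1] unfolding R1_def by auto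
            qed
            then have "p2 = 0" using inter0 p2V by simp
            then have "a \<in> R1" using asum p1V a unfolding R1_def by simp
            then show ?thesis using y' by auto
          qed
        qed
      qed
      moreover have "\<sigma> x = x" "- \<sigma> y = y" using x2 y1 V1 V2 by auto
      ultimately show "p \<in> conj_fixed_set R \<sigma>"
        unfolding p conj_fixed_set_def hyperplane_complement_def by auto
    qed
  qed
  have c2: "convex C \<and> (\<exists>W. open W \<and> C = Collect r2.reg \<inter> W)" if "C \<in> components (Collect r2.reg)" for C
    using that r2.chambers(1) r2.chambers(3) by auto
  have c1: "convex C \<and> (\<exists>W. open W \<and> C = Collect r1.reg \<inter> W)" if "C \<in> components (Collect r1.reg)" for C
    using that r1.chambers(1) r1.chambers(3) by auto
  note pc = product_components[OF c2 c1]
  have "\<forall>C \<in> components (conj_fixed_set R \<sigma>). contractible C"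
    unfolding F using pc(3) convex_imp_contractible by blast
  moreover have "card (components (conj_fixed_set R \<sigma>)) = card (refl_group R1) * card (refl_group R2)"
  proof -
    have "card (components (conj_fixed_set R \<sigma>)) = card (components (Collect r2.reg)) * card (components (Collect r1.reg))"
      unfolding F by (rule pc(2))
    also have "\<dots> = card (refl_group R2) * card (refl_group R1)"
      using r1.chambers(1,2) r2.chambers(1,2) by simp
    finally show ?thesis by (simp only: mult.commute)
  qed
  ultimately show ?thesis unfolding R1_def R2_def V1_def V2_def by simp
qed


end
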